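(* Let $X_1,X_2$ be Polish spaces, $\mu_1\in\mathcal P(X_1)$, $\mu_2\in\mathcal P^n(X_2)$ for some $n\in\mathbb N$, and $\pi\in\Pi(\mu_1,\mu_2)$. Then for $1<q\le 2$, $$D_q(\pi,\mu_1\otimes\mu_2)\le\phi_q(n)=\frac{n^{q-1}-1}{q-1}.$$
   Context: $\mathcal P^n(X)$ denotes the set of probability measures on $X$ supported on at most $n$ points; $\Pi(\mu_1,\mu_2)$ the set of couplings. The Tsallis relative entropy is $D_q(\mu,\nu)=\frac{1}{q-1}\int\big[(\frac{d\mu}{d\nu})^q-\frac{d\mu}{d\nu}\big]\,d\nu$ if $\mu\ll\nu$ and $q>1$, $+\infty$ otherwise; $\phi_q(x)=\frac{x^{q-1}-1}{q-1}$ for $q>1$. *)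

theory Defs
  imports "HOL-Probability.Probability"
begin

definition phi_q :: "real \<Rightarrow> real \<Rightarrow> real" where
  "phi_q q x = (x powr (q - 1) - 1) / (q - 1)"

text \<open>Tsallis relative entropy D_q(mu, nu) for q > 1, valued in the extended reals.
  If mu << nu (on the same sigma-algebra) with density f = d mu / d nu, it is
  (1/(q-1)) * integral of (f^q - f) d nu; the integrand is bounded below by -1, so for a
  finite nu a non-integrable integrand has integral +infinity.\<close>
definition tsallis_div :: "real \<Rightarrow> 'a measure \<Rightarrow> 'a measure \<Rightarrow> ereal" where
  "tsallis_div q \<mu> \<nu> =
     (if q > 1 \<and> sets \<mu> = sets \<nu> \<and> absolutely_continuous \<nu> \<mu> then
        (let f = (\<lambda>x. enn2real (RN_deriv \<nu> \<mu> x)) in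
          if integrable \<nu> (\<lambda>x. f x powr q - f x)
          then ereal ((\<integral>x. (f x powr q - f x) \<partial>\<nu>) / (q - 1))
          else \<infinity>)
      else \<infinity>)"

definition supported_on_at_most :: "nat \<Rightarrow> 'a measure \<Rightarrow> bool" where
  "supported_on_at_most n \<mu> \<longleftrightarrow>
     (\<exists>S. finite S \<and> card S \<le> n \<and> S \<in> sets \<mu> \<and> emeasure \<mu> (space \<mu> - S) = 0)"

definition coupling :: "('a \<times> 'b) measure \<Rightarrow> 'a measure \<Rightarrow> 'b measure \<Rightarrow> bool" where
  "coupling \<pi> \<mu>1 \<mu>2 \<longleftrightarrow>
     prob_space \<pi> \<and> sets \<pi> = sets (\<mu>1 \<Otimes>\<^sub>M \<mu>2) \<and>
     distr \<pi> \<mu>1 fst = \<mu>1 \<and> distr \<pi> \<mu>2 snd = \<mu>2"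

end

theory Submission imports Defs begin

lemma sum_ind_eq: fixes c :: "'b \<Rightarrow> real" assumes "finite S"
  shows "(\<Sum>s\<in>S. c s * indicator {s} y) = (if y \<in> S then c y else 0)"
  using assms by (simp add: indicator_def of_bool_def if_distrib sum.delta' cong: if_cong)

lemma sum_ind_eq_enn: fixes c :: "'b \<Rightarrow> ennreal" assumes "finite S"
  shows "(\<Sum>s\<in>S. c s * indicator {s} y) = (if y \<in> S then c y else 0)"
  using assms by (simp add: indicator_def of_bool_def if_distrib sum.delta' cong: if_cong)

lemma jensen_part:
  fixes p :: "'b \<Rightarrow> real" and q :: real
  assumes fin: "finite T" and pos: "\<And>s. s \<in> T \<Longrightarrow> p s > 0" and sum1: "(\<Sum>s\<in>T. p s) = 1"
    and q: "1 < q" "q \<le> 2"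
  shows "(\<Sum>s\<in>T. p s powr (2 - q)) \<le> real (card T) powr (q - 1)"
proof -
  define m where "m = real (card T)"
  have "T \<noteq> {}" using sum1 by auto
  then have m: "m > 0" using fin by (simp add: m_def card_gt_0_iff)
  have each: "(m * p s) powr (2 - q) \<le> (2 - q) * (m * p s) + (q - 1)" if "s \<in> T" for s
    using Youngs_inequality_0[of "2 - q" "q - 1" "m * p s" 1] q m pos[OF that] by simp
  have "(\<Sum>s\<in>T. (m * p s) powr (2 - q)) \<le> (\<Sum>s\<in>T. (2 - q) * (m * p s) + (q - 1))"
    by (rule sum_mono) (rule each)
  also have "\<dots> = (2 - q) * m * (\<Sum>s\<in>T. p s) + m * (q - 1)"
    by (simp add: sum.distrib sum_distrib_left m_def mult.assoc)
  also have "\<dots> = m" using sum1 by (simp add: algebra_simps)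
  finally have A: "m powr (2 - q) * (\<Sum>s\<in>T. p s powr (2 - q)) \<le> m"
    using m pos by (simp add: powr_mult sum_distrib_left less_imp_le)
  have "m = m powr (2 - q) * m powr (q - 1)" using m by (simp add: powr_add[symmetric])
  with A have "m powr (2 - q) * (\<Sum>s\<in>T. p s powr (2 - q)) \<le> m powr (2 - q) * m powr (q - 1)" by simp
  then show ?thesis using m by (simp add: m_def)
qed

theorem lemma2p1:
  fixes \<mu>1 :: "'a::polish_space measure" and \<mu>2 :: "'b::polish_space measure"
    and \<pi> :: "('a \<times> 'b) measure" and n :: nat and q :: real
  assumes "prob_space \<mu>1" and "sets \<mu>1 = sets borel"
    and "prob_space \<mu>2" and "sets \<mu>2 = sets borel"
    and "supported_on_at_most n \<mu>2"
    and "coupling \<pi> \<mu>1 \<mu>2"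
    and "1 < q" and "q \<le> 2"
  shows "tsallis_div q \<pi> (\<mu>1 \<Otimes>\<^sub>M \<mu>2) \<le> ereal (phi_q q (real n))"
proof -
  interpret p1: prob_space \<mu>1 by fact
  interpret p2: prob_space \<mu>2 by fact
  define \<nu> where "\<nu> = \<mu>1 \<Otimes>\<^sub>M \<mu>2"
  interpret nu: prob_space \<nu> unfolding \<nu>_def by (rule prob_space_pair) fact+
  have cpl: "prob_space \<pi>" "sets \<pi> = sets \<nu>" "distr \<pi> \<mu>1 fst = \<mu>1" "distr \<pi> \<mu>2 snd = \<mu>2"
    using assms(6) unfolding coupling_def \<nu>_def by auto
  interpret pi: prob_space \<pi> by (rule cpl(1))
  have sp1: "space \<mu>1 = UNIV" using assms(2) sets_eq_imp_space_eq by fastforce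
  have sp2: "space \<mu>2 = UNIV" using assms(4) sets_eq_imp_space_eq by fastforce
  have spnu: "space \<nu> = UNIV" by (simp add: \<nu>_def space_pair_measure sp1 sp2)
  have sppi: "space \<pi> = UNIV" using cpl(2) sets_eq_imp_space_eq spnu by metis
  have sing[measurable]: "\<And>y. {y} \<in> sets \<mu>2" using assms(4) by simp
  have mfst: "fst \<in> measurable \<pi> \<mu>1"
    by (simp add: measurable_cong_sets[OF cpl(2) refl] \<nu>_def)
  have msnd: "snd \<in> measurable \<pi> \<mu>2"
    by (simp add: measurable_cong_sets[OF cpl(2) refl] \<nu>_def)
  have pfst: "emeasure \<pi> (fst -` B) = emeasure \<mu>1 B" if "B \<in> sets \<mu>1" for B
    using emeasure_distr[OF mfst that] cpl(3) sppi by simp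
  have psnd: "emeasure \<pi> (snd -` B) = emeasure \<mu>2 B" if "B \<in> sets \<mu>2" for B
    using emeasure_distr[OF msnd that] cpl(4) sppi by simp
  obtain S where S: "finite S" "card S \<le> n" "S \<in> sets \<mu>2" "emeasure \<mu>2 (space \<mu>2 - S) = 0"
    using assms(5) unfolding supported_on_at_most_def by blast
  define p where "p y = measure \<mu>2 {y}" for y
  define S' where "S' = {y\<in>S. p y > 0}"
  have S'fin: "finite S'" using S(1) by (simp add: S'_def)
  have pos: "\<And>s. s \<in> S' \<Longrightarrow> p s > 0" by (simp add: S'_def)
  have S'sets[measurable]: "S' \<in> sets \<mu>2" using S'fin by (simp add: assms(4) finite_imp_closed)
  have S'c[measurable]: "- S' \<in> sets \<mu>2"
    using sets.compl_sets[OF S'sets] sp2 by (simp add: Compl_eq_Diff_UNIV)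
  have nullS': "emeasure \<mu>2 (- S') = 0"
  proof -
    have "- S' = (space \<mu>2 - S) \<union> (S - S')" using sp2 by (auto simp: S'_def)
    moreover have "emeasure \<mu>2 (S - S') = 0"
    proof -
      have "emeasure \<mu>2 (S - S') = (\<Sum>s\<in>S - S'. emeasure \<mu>2 {s})"
        using S(1) by (intro emeasure_eq_sum_singleton) auto
      also have "\<dots> = 0"
        using measure_nonneg[of \<mu>2] by (intro sum.neutral) (auto simp: S'_def p_def p2.emeasure_eq_measure less_le)
      finally show ?thesis .
    qed
    ultimately show ?thesis
      using emeasure_subadditive[of "space \<mu>2 - S" \<mu>2 "S - S'"] S(3,4) S'sets by simp
  qed
  have sumS': "(\<Sum>s\<in>S'. p s) = 1"
  proof -
    have "measure \<mu>2 S' = 1"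
      using p2.prob_compl[OF S'sets] nullS' sp2 p2.emeasure_eq_measure
      by (simp add: Compl_eq_Diff_UNIV)
    then show ?thesis
      using measure_eq_sum_singleton[OF S'fin, of \<mu>2] by (simp add: p_def)
  qed
  define W where "W y = (\<Sum>s\<in>S'. (1 / p s) * indicator {s} y)" for y
  have W_eq: "W y = (if y \<in> S' then 1 / p y else 0)" for y
    unfolding W_def by (rule sum_ind_eq[OF S'fin])
  have W_nn: "W y \<ge> 0" for y using pos by (simp add: W_eq less_imp_le)
  define C where "C = (\<Sum>s\<in>S'. 1 / p s)"
  have W_le: "W y \<le> C" for y
  proof (cases "y \<in> S'")
    case True
    then show ?thesis unfolding W_eq C_def
      using member_le_sum[of y S' "\<lambda>s. 1 / p s"] pos S'fin by (simp add: less_imp_le)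
  next
    case False
    then show ?thesis unfolding W_eq C_def
      using pos by (simp add: sum_nonneg less_imp_le)
  qed
  have W_meas[measurable]: "W \<in> borel_measurable \<mu>2" unfolding W_def by measurable
  have K: "emeasure \<pi> A \<le> (\<integral>\<^sup>+z. ennreal (W (snd z)) * indicator A z \<partial>\<nu>)" if A: "A \<in> sets \<nu>" for A
  proof -
    define As where "As s = (\<lambda>x. (x, s)) -` A" for s
    have As_sets[measurable]: "As s \<in> sets \<mu>1" for s
      unfolding As_def using A by (simp add: \<nu>_def sets_Pair2)
    have Api: "A \<in> sets \<pi>" using A cpl(2) by simp
    have sub: "A \<subseteq> (\<Union>s\<in>S'. fst -` As s) \<union> snd -` (- S')" by (auto simp: As_def)
    have fsets: "fst -` As s \<in> sets \<pi>" for s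
      using measurable_sets[OF mfst As_sets[of s]] sppi by simp
    have ssets: "snd -` (- S') \<in> sets \<pi>"
      using measurable_sets[OF msnd S'c] sppi by simp
    have Usets: "(\<Union>s\<in>S'. fst -` As s) \<in> sets \<pi>" using fsets S'fin by blast
    have "emeasure \<pi> A \<le> emeasure \<pi> ((\<Union>s\<in>S'. fst -` As s) \<union> snd -` (- S'))"
      by (rule emeasure_mono[OF sub]) (use Usets ssets in blast)
    also have "\<dots> \<le> emeasure \<pi> (\<Union>s\<in>S'. fst -` As s) + emeasure \<pi> (snd -` (- S'))"
      by (rule emeasure_subadditive[OF Usets ssets])
    also have "emeasure \<pi> (snd -` (- S')) = 0"
      using psnd[of "- S'"] nullS' S'sets by (simp add: assms(4))
    also have "emeasure \<pi> (\<Union>s\<in>S'. fst -` As s) \<le> (\<Sum>s\<in>S'. emeasure \<pi> (fst -` As s))"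
      by (rule emeasure_subadditive_finite) (use S'fin fsets in auto)
    also have "\<dots> = (\<Sum>s\<in>S'. emeasure \<mu>1 (As s))" using pfst by simp
    also have "\<dots> = (\<integral>\<^sup>+z. ennreal (W (snd z)) * indicator A z \<partial>\<nu>)"
    proof -
      have eq: "ennreal (W (snd z)) * indicator A z = (\<Sum>s\<in>S'. ennreal (1 / p s) * indicator (As s \<times> {s}) z)" for z
      proof -
        obtain x y where z: "z = (x, y)" by (cases z)
        have "indicator (As s \<times> {s}) z = (indicator {s} y * indicator A z :: ennreal)" for s
          by (auto simp: indicator_def As_def z)
        then have "(\<Sum>s\<in>S'. ennreal (1 / p s) * indicator (As s \<times> {s}) z)
           = (\<Sum>s\<in>S'. ennreal (1 / p s) * indicator {s} y) * indicator A z"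
          by (simp add: sum_distrib_right mult.assoc)
        also have "\<dots> = ennreal (W (snd z)) * indicator A z"
          by (simp add: sum_ind_eq_enn[OF S'fin] W_eq z)
        finally show ?thesis by simp
      qed
      have ms: "As s \<times> {s} \<in> sets \<nu>" for s by (simp add: \<nu>_def)
      have "(\<integral>\<^sup>+z. ennreal (W (snd z)) * indicator A z \<partial>\<nu>)
          = (\<Sum>s\<in>S'. \<integral>\<^sup>+z. ennreal (1 / p s) * indicator (As s \<times> {s}) z \<partial>\<nu>)"
        unfolding eq by (rule nn_integral_sum) (use ms in simp)
      also have "\<dots> = (\<Sum>s\<in>S'. ennreal (1 / p s) * emeasure \<nu> (As s \<times> {s}))"
        using ms by (simp add: nn_integral_cmult_indicator)
      also have "\<dots> = (\<Sum>s\<in>S'. emeasure \<mu>1 (As s))"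
      proof (rule sum.cong[OF refl])
        fix s assume s: "s \<in> S'"
        have "emeasure \<nu> (As s \<times> {s}) = emeasure \<mu>1 (As s) * ennreal (p s)"
          unfolding \<nu>_def by (simp add: p2.emeasure_pair_measure_Times p_def p2.emeasure_eq_measure)
        moreover have "ennreal (1 / p s) * ennreal (p s) = 1"
          using pos[OF s] by (simp add: ennreal_mult[symmetric])
        ultimately show "ennreal (1 / p s) * emeasure \<nu> (As s \<times> {s}) = emeasure \<mu>1 (As s)"
          by (metis mult.commute mult.left_commute mult_1_right)
      qed
      finally show ?thesis by simp
    qed
    finally show ?thesis by simp
  qed
  have Wsnd[measurable]: "(\<lambda>z. W (snd z)) \<in> borel_measurable \<nu>" unfolding \<nu>_def by measurable
  have ac: "absolutely_continuous \<nu> \<pi>"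
    unfolding absolutely_continuous_def
  proof
    fix A assume A: "A \<in> null_sets \<nu>"
    then have As[measurable]: "A \<in> sets \<nu>" by auto
    have "emeasure \<pi> A \<le> (\<integral>\<^sup>+z. ennreal (W (snd z)) * indicator A z \<partial>\<nu>)"
      using K As by auto
    also have "\<dots> = 0"
    proof (subst nn_integral_0_iff_AE)
      show "(\<lambda>z. ennreal (W (snd z)) * indicator A z) \<in> borel_measurable \<nu>" by measurable
      show "AE z in \<nu>. ennreal (W (snd z)) * indicator A z = 0"
        using AE_not_in[OF A] by eventually_elim simp
    qed
    finally show "A \<in> null_sets \<pi>" using A cpl(2) by (auto simp: null_sets_def)
  qed
  define f where "f = RN_deriv \<nu> \<pi>"
  have f_meas[measurable]: "f \<in> borel_measurable \<nu>" unfolding f_def by simp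
  have sf: "sigma_finite_measure \<pi>" by (rule prob_space_imp_sigma_finite) (rule cpl(1))
  have dens: "density \<nu> f = \<pi>" unfolding f_def by (rule nu.density_RN_deriv[OF ac cpl(2)])
  have fle: "AE z in \<nu>. f z \<le> ennreal (W (snd z))"
  proof (rule ccontr)
    assume nA: "\<not> ?thesis"
    define B where "B = {z \<in> space \<nu>. ennreal (W (snd z)) < f z}"
    have B[measurable]: "B \<in> sets \<nu>" unfolding B_def by measurable
    have fin: "(\<integral>\<^sup>+z. ennreal (W (snd z)) * indicator B z \<partial>\<nu>) \<noteq> \<infinity>"
    proof -
      have "(\<integral>\<^sup>+z. ennreal (W (snd z)) * indicator B z \<partial>\<nu>) \<le> (\<integral>\<^sup>+z. ennreal C \<partial>\<nu>)"
        by (intro nn_integral_mono) (auto simp: indicator_def W_le ennreal_leI)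
      also have "\<dots> = ennreal C" using nu.emeasure_space_1 by simp
      finally show ?thesis using neq_top_trans[OF ennreal_neq_top] by auto
    qed
    have "(\<integral>\<^sup>+z. ennreal (W (snd z)) * indicator B z \<partial>\<nu>) < (\<integral>\<^sup>+z. f z * indicator B z \<partial>\<nu>)"
    proof (rule nn_integral_less)
      show "(\<lambda>z. ennreal (W (snd z)) * indicator B z) \<in> borel_measurable \<nu>" by measurable
      show "(\<lambda>z. f z * indicator B z) \<in> borel_measurable \<nu>" by measurable
      show "(\<integral>\<^sup>+z. ennreal (W (snd z)) * indicator B z \<partial>\<nu>) \<noteq> \<infinity>" by (rule fin)
      show "AE z in \<nu>. ennreal (W (snd z)) * indicator B z \<le> f z * indicator B z"
      proof (intro AE_I2)
        fix z show "ennreal (W (snd z)) * indicator B z \<le> f z * indicator B z"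
          by (cases "z \<in> B") (simp_all add: B_def less_imp_le)
      qed
      show "\<not> (AE z in \<nu>. f z * indicator B z \<le> ennreal (W (snd z)) * indicator B z)"
      proof
        assume "AE z in \<nu>. f z * indicator B z \<le> ennreal (W (snd z)) * indicator B z"
        then have "AE z in \<nu>. f z \<le> ennreal (W (snd z))"
        proof eventually_elim
          case (elim z)
          show ?case
          proof (cases "z \<in> B")
            case True
            with elim show ?thesis by simp
          next
            case False
            then show ?thesis by (simp add: B_def spnu not_less)
          qed
        qed
        with nA show False by simp
      qed
    qed
    also have "\<dots> = emeasure \<pi> B" using emeasure_density[OF f_meas B] dens by simp
    also have "\<dots> \<le> (\<integral>\<^sup>+z. ennreal (W (snd z)) * indicator B z \<partial>\<nu>)" using K[OF B] .
    finally show False by simp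
  qed
  define fr where "fr z = enn2real (f z)" for z
  have fr_meas[measurable]: "fr \<in> borel_measurable \<nu>" unfolding fr_def by measurable
  have fr_nn: "fr z \<ge> 0" for z by (simp add: fr_def)
  have fr_le: "AE z in \<nu>. fr z \<le> W (snd z)"
    using fle by eventually_elim (simp add: fr_def enn2real_leI W_nn)
  have frC: "AE z in \<nu>. fr z \<le> C"
    using fr_le by eventually_elim (metis W_le order_trans)
  have int_pi: "integral\<^sup>L \<pi> g = (\<integral>z. fr z * g z \<partial>\<nu>)" if [measurable]: "g \<in> borel_measurable \<nu>" for g
    unfolding fr_def f_def by (rule nu.RN_deriv_integral[OF sf ac cpl(2) that])
  have fr_int: "(\<integral>z. fr z \<partial>\<nu>) = 1"
    using int_pi[of "\<lambda>_. 1"] pi.prob_space by simp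
  define V where "V y = W y powr (q - 1)" for y
  have V_meas[measurable]: "V \<in> borel_measurable \<mu>2" unfolding V_def by measurable
  have int_V: "(\<integral>z. fr z * V (snd z) \<partial>\<nu>) = (\<integral>y. V y \<partial>\<mu>2)"
  proof -
    have "(\<integral>z. fr z * V (snd z) \<partial>\<nu>) = (\<integral>z. V (snd z) \<partial>\<pi>)"
      by (rule int_pi[symmetric]) (simp add: \<nu>_def)
    also have "\<dots> = (\<integral>y. V y \<partial>(distr \<pi> \<mu>2 snd))" by (rule integral_distr[symmetric, OF msnd V_meas])
    also have "\<dots> = (\<integral>y. V y \<partial>\<mu>2)" using cpl(4) by simp
    finally show ?thesis .
  qed
  have pw: "(1 / p s) powr (q - 1) * p s = p s powr (2 - q)" if "s \<in> S'" for s
  proof -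
    have ps: "p s > 0" using pos[OF that] .
    have h: "(1 / p s) powr (q - 1) = p s powr (1 - q)"
      using powr_minus_divide[of "p s" "q - 1"] ps by (simp add: powr_divide)
    have e: "(2::real) - q = (1 - q) + 1" by simp
    show ?thesis unfolding h using ps by (subst e, subst powr_add) simp
  qed
  have ind_int: "integrable \<mu>2 (indicator {s} :: 'b \<Rightarrow> real)" for s
    by (intro integrable_real_indicator) (simp_all add: p2.emeasure_eq_measure)
  have V_sum: "(\<integral>y. V y \<partial>\<mu>2) = (\<Sum>s\<in>S'. p s powr (2 - q))"
  proof -
    have Veq: "V = (\<lambda>y. \<Sum>s\<in>S'. ((1 / p s) powr (q - 1)) * indicator {s} y)"
      by (rule ext) (simp add: V_def W_eq sum_ind_eq[OF S'fin])
    have "(\<integral>y. V y \<partial>\<mu>2) = (\<Sum>s\<in>S'. \<integral>y. (1 / p s) powr (q - 1) * indicator {s} y \<partial>\<mu>2)"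
      unfolding Veq by (rule Bochner_Integration.integral_sum) (simp add: ind_int)
    also have "\<dots> = (\<Sum>s\<in>S'. (1 / p s) powr (q - 1) * p s)"
      by (simp add: p_def)
    also have "\<dots> = (\<Sum>s\<in>S'. p s powr (2 - q))" by (rule sum.cong[OF refl]) (rule pw)
    finally show ?thesis .
  qed
  have q0: "0 \<le> q" using assms(7) by simp
  have C0: "0 \<le> C" using W_nn[of undefined] W_le[of undefined] by linarith
  have Vsnd[measurable]: "(\<lambda>z. V (snd z)) \<in> borel_measurable \<nu>" unfolding \<nu>_def by measurable
  have int1: "integrable \<nu> (\<lambda>z. fr z powr q)"
    by (rule nu.integrable_const_bound[where B="C powr q"])
       (use frC in \<open>eventually_elim, auto intro!: powr_mono2 simp: fr_nn q0\<close>)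
  have VC: "V y \<le> C powr (q - 1)" for y
    unfolding V_def using W_le W_nn assms(7) by (intro powr_mono2) auto
  have V_nn: "V y \<ge> 0" for y unfolding V_def by simp
  have int2: "integrable \<nu> (\<lambda>z. fr z * V (snd z))"
    by (rule nu.integrable_const_bound[where B="C * C powr (q - 1)"])
       (use frC in \<open>eventually_elim, auto intro!: mult_mono simp: fr_nn V_nn VC abs_mult C0\<close>)
  have int3: "integrable \<nu> fr"
    by (rule nu.integrable_const_bound[where B="C"]) (use frC in \<open>eventually_elim, auto simp: fr_nn\<close>)
  have ptw: "AE z in \<nu>. fr z powr q \<le> fr z * V (snd z)"
    using fr_le
  proof eventually_elim
    case (elim z)
    have "fr z powr q = fr z * fr z powr (q - 1)"
      using powr_add[of "fr z" 1 "q - 1"] fr_nn[of z] by simp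
    also have "\<dots> \<le> fr z * V (snd z)"
      unfolding V_def using elim fr_nn[of z] assms(7) by (intro mult_left_mono powr_mono2) auto
    finally show ?case .
  qed
  have bound: "(\<integral>z. fr z powr q \<partial>\<nu>) \<le> (\<Sum>s\<in>S'. p s powr (2 - q))"
    using integral_mono_AE[OF int1 int2 ptw] int_V V_sum by simp
  have m: "(\<Sum>s\<in>S'. p s powr (2 - q)) \<le> real (card S') powr (q - 1)"
    by (rule jensen_part[OF S'fin pos sumS' assms(7,8)])
  have cardS': "card S' \<le> n" using card_mono[OF S(1), of S'] S(2) by (auto simp: S'_def)
  have mn: "real (card S') powr (q - 1) \<le> real n powr (q - 1)"
    using cardS' assms(7) by (intro powr_mono2) auto
  have main: "(\<integral>z. fr z powr q - fr z \<partial>\<nu>) / (q - 1) \<le> phi_q q (real n)"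
    unfolding phi_q_def using Bochner_Integration.integral_diff[OF int1 int3] fr_int bound m mn assms(7)
    by (intro divide_right_mono) auto
  have intd: "integrable \<nu> (\<lambda>z. fr z powr q - fr z)" using int1 int3 by auto
  show ?thesis
    unfolding tsallis_div_def \<nu>_def[symmetric]
    using assms(7) cpl(2) ac intd main by (simp add: Let_def f_def[symmetric] fr_def[symmetric])
qed
end
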